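(* Let $G$ be a finite simple graph, let $I$ be a maximum critical independent set in $G$, and let $X=I\cup N(I)$. Then $$|\operatorname{nucleus}(G)|+|\operatorname{diadem}(G)|\le |\operatorname{nucleus}(G[X])|+|\operatorname{diadem}(G[X])|.$$
   Context: For a graph $H$ and $Y\subseteq V(H)$, $N_H(Y)$ is the set of vertices of $H$ adjacent to some vertex of $Y$, and $d_H(Y)=|Y|-|N_H(Y)|$. An independent set $S$ of $H$ is critical in $H$ if $d_H(S)=\max\{d_H(Y):Y\subseteq V(H)\}$; the empty set may be critical. A maximum critical independent set is a critical independent set of maximum cardinality. $\operatorname{nucleus}(H)$ and $\operatorname{diadem}(H)$ are, respectively, the intersection and the union of all maximum critical independent sets of $H$; both are empty if the only critical independent set is $\emptyset$. $N(I)=N_G(I)$, and $G[X]$ is the subgraph of $G$ induced by $X$. *)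

theory Defs
  imports Main
begin

text \<open>The induced subgraph G[X] (X a subset of V) is represented by the vertex set X
with the same adjacency relation; all notions below only look at edges
between vertices of the given vertex set.\<close>

definition simple_graph :: "'a set \<Rightarrow> ('a \<Rightarrow> 'a \<Rightarrow> bool) \<Rightarrow> bool" where
  "simple_graph V E \<longleftrightarrow> finite V \<and> (\<forall>x y. E x y \<longrightarrow> E y x)
     \<and> (\<forall>x. \<not> E x x) \<and> (\<forall>x y. E x y \<longrightarrow> x \<in> V \<and> y \<in> V)"

definition nbhd :: "'a set \<Rightarrow> ('a \<Rightarrow> 'a \<Rightarrow> bool) \<Rightarrow> 'a set \<Rightarrow> 'a set" where
  "nbhd V E Y = {v \<in> V. \<exists>y\<in>Y. E v y}"

definition dfc :: "'a set \<Rightarrow> ('a \<Rightarrow> 'a \<Rightarrow> bool) \<Rightarrow> 'a set \<Rightarrow> int" where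
  "dfc V E Y = int (card Y) - int (card (nbhd V E Y))"

definition indep :: "'a set \<Rightarrow> ('a \<Rightarrow> 'a \<Rightarrow> bool) \<Rightarrow> 'a set \<Rightarrow> bool" where
  "indep V E S \<longleftrightarrow> S \<subseteq> V \<and> (\<forall>x\<in>S. \<forall>y\<in>S. \<not> E x y)"

definition critical_indep :: "'a set \<Rightarrow> ('a \<Rightarrow> 'a \<Rightarrow> bool) \<Rightarrow> 'a set \<Rightarrow> bool" where
  "critical_indep V E S \<longleftrightarrow> indep V E S \<and>
     dfc V E S = Max {dfc V E Y | Y. Y \<subseteq> V}"

definition max_critical_indep :: "'a set \<Rightarrow> ('a \<Rightarrow> 'a \<Rightarrow> bool) \<Rightarrow> 'a set \<Rightarrow> bool" where
  "max_critical_indep V E S \<longleftrightarrow> critical_indep V E S \<and>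
     (\<forall>T. critical_indep V E T \<longrightarrow> card T \<le> card S)"

definition nucleus :: "'a set \<Rightarrow> ('a \<Rightarrow> 'a \<Rightarrow> bool) \<Rightarrow> 'a set" where
  "nucleus V E = (if {S. max_critical_indep V E S} = {} then {}
                  else \<Inter> {S. max_critical_indep V E S})"

definition diadem :: "'a set \<Rightarrow> ('a \<Rightarrow> 'a \<Rightarrow> bool) \<Rightarrow> 'a set" where
  "diadem V E = \<Union> {S. max_critical_indep V E S}"

end

theory Submission
  imports Defs
begin

lemma nbhd_Un: "nbhd V E (A \<union> B) = nbhd V E A \<union> nbhd V E B"
  unfolding nbhd_def by blast

lemma nbhd_mono: "A \<subseteq> B \<Longrightarrow> nbhd V E A \<subseteq> nbhd V E B"
  unfolding nbhd_def by blast

lemma nbhd_sub: "nbhd V E A \<subseteq> V"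
  unfolding nbhd_def by blast

locale mci =
  fixes V :: "'a set" and E :: "'a \<Rightarrow> 'a \<Rightarrow> bool" and I :: "'a set"
  assumes sg: "simple_graph V E"
    and mI: "max_critical_indep V E I"
begin

definition "D = Max {dfc V E Y | Y. Y \<subseteq> V}"

lemma finV: "finite V" using sg unfolding simple_graph_def by blast
lemma symE: "E x y \<Longrightarrow> E y x" using sg unfolding simple_graph_def by blast
lemma EV: "E x y \<Longrightarrow> x \<in> V \<and> y \<in> V" using sg unfolding simple_graph_def by blast

lemma finsetD: "finite {dfc V E Y | Y. Y \<subseteq> V}"
proof -
  have "{dfc V E Y | Y. Y \<subseteq> V} = dfc V E ` Pow V" by auto
  thus ?thesis using finV by simp
qed

lemma dfc_le: "Y \<subseteq> V \<Longrightarrow> dfc V E Y \<le> D"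
  unfolding D_def by (rule Max_ge[OF finsetD]) blast

lemma I_V: "I \<subseteq> V" and I_ind: "\<And>x y. x \<in> I \<Longrightarrow> y \<in> I \<Longrightarrow> \<not> E x y"
  and dfcI: "dfc V E I = D"
  using mI unfolding max_critical_indep_def critical_indep_def indep_def D_def by auto

lemma I_max: "critical_indep V E T \<Longrightarrow> card T \<le> card I"
  using mI unfolding max_critical_indep_def by auto

lemma finI: "finite I" using I_V finV finite_subset by blast

lemma fin_sub: "A \<subseteq> V \<Longrightarrow> finite A" using finV finite_subset by blast

lemma fin_nbhd: "finite (nbhd W E A)"
proof -
  have "nbhd W E A \<subseteq> V" unfolding nbhd_def using EV by blast
  thus ?thesis by (rule fin_sub)
qed

lemma hall:
  assumes A: "A \<subseteq> nbhd V E I"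
  shows "card A \<le> card (nbhd I E A)"
proof -
  define I' where "I' = I - nbhd I E A"
  have sub1: "nbhd I E A \<subseteq> I" unfolding nbhd_def by blast
  have sub2: "nbhd V E I' \<subseteq> nbhd V E I - A"
  proof
    fix v assume v: "v \<in> nbhd V E I'"
    then obtain y where y: "y \<in> I'" "E v y" "v \<in> V" unfolding nbhd_def by blast
    have "v \<in> nbhd V E I" using y unfolding I'_def nbhd_def by blast
    moreover have "v \<notin> A"
    proof
      assume "v \<in> A"
      hence "y \<in> nbhd I E A" using y symE unfolding I'_def nbhd_def by blast
      thus False using y unfolding I'_def by blast
    qed
    ultimately show "v \<in> nbhd V E I - A" by blast
  qed
  have "I' \<subseteq> V" using I_V unfolding I'_def by blast
  hence le: "dfc V E I' \<le> dfc V E I" using dfc_le dfcI by simp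
  have c1: "card I' = card I - card (nbhd I E A)"
    unfolding I'_def using sub1 finI by (simp add: card_Diff_subset finite_subset)
  have c1': "card (nbhd I E A) \<le> card I" by (rule card_mono[OF finI sub1])
  have c2: "card (nbhd V E I') \<le> card (nbhd V E I - A)"
    by (rule card_mono[OF _ sub2]) (simp add: fin_nbhd)
  have c3: "card (nbhd V E I - A) = card (nbhd V E I) - card A"
    using A fin_nbhd by (simp add: card_Diff_subset finite_subset)
  have c3': "card A \<le> card (nbhd V E I)" by (rule card_mono[OF fin_nbhd A])
  show ?thesis using le c1 c1' c2 c3 c3' unfolding dfc_def by linarith
qed

lemma crit_union:
  assumes "Y \<subseteq> V" "Z \<subseteq> V" "dfc V E Y = D" "dfc V E Z = D"
  shows "dfc V E (Y \<union> Z) = D"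
proof -
  have f: "finite Y" "finite Z" using fin_sub assms(1,2) by auto
  have a: "card Y + card Z = card (Y \<union> Z) + card (Y \<inter> Z)" using f card_Un_Int by blast
  have n1: "nbhd V E (Y \<union> Z) = nbhd V E Y \<union> nbhd V E Z" by (rule nbhd_Un)
  have n2: "nbhd V E (Y \<inter> Z) \<subseteq> nbhd V E Y \<inter> nbhd V E Z" unfolding nbhd_def by blast
  have b: "card (nbhd V E Y) + card (nbhd V E Z) = card (nbhd V E Y \<union> nbhd V E Z) + card (nbhd V E Y \<inter> nbhd V E Z)"
    by (rule card_Un_Int[OF fin_nbhd fin_nbhd])
  have c: "card (nbhd V E (Y \<inter> Z)) \<le> card (nbhd V E Y \<inter> nbhd V E Z)"
    by (rule card_mono[OF _ n2]) (simp add: fin_nbhd)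
  have d1: "dfc V E (Y \<union> Z) \<le> D" using assms dfc_le by simp
  have d2: "dfc V E (Y \<inter> Z) \<le> D" using assms(1) by (intro dfc_le) blast
  have n1': "card (nbhd V E (Y \<union> Z)) = card (nbhd V E Y \<union> nbhd V E Z)" using n1 by simp
  show ?thesis using a b c d1 d2 assms(3,4) n1' unfolding dfc_def by linarith
qed

lemma I_NI_disj: "I \<inter> nbhd V E I = {}"
  unfolding nbhd_def using I_ind by blast

definition "X = I \<union> nbhd V E I"

lemma X_V: "X \<subseteq> V" unfolding X_def using I_V nbhd_sub[of V E I] by (rule Un_least)

lemma crit_sub_X:
  assumes S: "critical_indep V E S"
  shows "S \<subseteq> X"
proof -
  have SV: "S \<subseteq> V" and Sind: "\<And>x y. x \<in> S \<Longrightarrow> y \<in> S \<Longrightarrow> \<not> E x y"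
    and dS: "dfc V E S = D"
    using S unfolding critical_indep_def indep_def D_def by auto
  define U where "U = S \<union> I"
  have UV: "U \<subseteq> V" unfolding U_def using SV I_V by blast
  have dU: "dfc V E U = D" unfolding U_def by (rule crit_union[OF SV I_V dS dfcI])
  define A where "A = S \<inter> nbhd V E I"
  define Z where "Z = I \<union> (S - nbhd V E I)"
  have ZUA: "Z = U - A" unfolding Z_def U_def A_def using I_NI_disj by blast
  have AU: "A \<subseteq> U" unfolding A_def U_def by blast
  have finU: "finite U" by (rule fin_sub[OF UV])
  have cZ: "card Z = card U - card A" unfolding ZUA using AU finU
    by (simp add: card_Diff_subset finite_subset)
  have cA: "card A \<le> card U" by (rule card_mono[OF finU AU])
  have NZ: "nbhd V E Z \<subseteq> nbhd V E U - nbhd I E A"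
  proof
    fix v assume v: "v \<in> nbhd V E Z"
    have "Z \<subseteq> U" unfolding ZUA by blast
    hence "v \<in> nbhd V E U" using v nbhd_mono[of Z U V E] by blast
    moreover have "v \<notin> nbhd I E A"
    proof
      assume vA: "v \<in> nbhd I E A"
      hence vI: "v \<in> I" unfolding nbhd_def by blast
      obtain z where z: "z \<in> Z" "E v z" using v unfolding nbhd_def by blast
      show False
      proof (cases "z \<in> I")
        case True thus ?thesis using I_ind vI z by blast
      next
        case False
        hence "z \<in> S - nbhd V E I" using z unfolding Z_def by blast
        moreover have "z \<in> nbhd V E I" using symE[OF z(2)] EV[OF z(2)] vI
          unfolding nbhd_def by blast
        ultimately show False by blast
      qed
    qed
    ultimately show "v \<in> nbhd V E U - nbhd I E A" by blast
  qed
  have NIA: "nbhd I E A \<subseteq> nbhd V E U"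
    unfolding nbhd_def A_def U_def using I_V by blast
  have h: "card A \<le> card (nbhd I E A)" by (rule hall) (auto simp: A_def)
  have c1: "card (nbhd V E Z) \<le> card (nbhd V E U - nbhd I E A)"
    by (rule card_mono[OF _ NZ]) (simp add: fin_nbhd)
  have c2: "card (nbhd V E U - nbhd I E A) = card (nbhd V E U) - card (nbhd I E A)"
    using NIA fin_nbhd by (simp add: card_Diff_subset finite_subset)
  have c3: "card (nbhd I E A) \<le> card (nbhd V E U)" by (rule card_mono[OF fin_nbhd NIA])
  have ZV: "Z \<subseteq> V" unfolding ZUA using UV by blast
  have "dfc V E Z \<ge> D" using dU cZ cA h c1 c2 c3 unfolding dfc_def by linarith
  hence dZ: "dfc V E Z = D" using dfc_le[OF ZV] by simp
  have Zind: "indep V E Z"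
    unfolding indep_def
  proof (intro conjI ballI)
    show "Z \<subseteq> V" by (rule ZV)
    fix x y assume x: "x \<in> Z" and y: "y \<in> Z"
    show "\<not> E x y"
    proof
      assume exy: "E x y"
      show False
      proof (cases "x \<in> I")
        case xI: True
        show False
        proof (cases "y \<in> I")
          case True thus False using xI exy I_ind by blast
        next
          case False
          hence "y \<in> S - nbhd V E I" using y unfolding Z_def by blast
          moreover have "y \<in> nbhd V E I" using symE[OF exy] EV[OF exy] xI
            unfolding nbhd_def by blast
          ultimately show False by blast
        qed
      next
        case xnI: False
        hence xS: "x \<in> S - nbhd V E I" using x unfolding Z_def by blast
        show False
        proof (cases "y \<in> I")
          case True
          hence "x \<in> nbhd V E I" using exy EV[OF exy] unfolding nbhd_def by blast
          thus False using xS by blast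
        next
          case False
          hence "y \<in> S" using y unfolding Z_def by blast
          thus False using xS Sind exy by blast
        qed
      qed
    qed
  qed
  have "critical_indep V E Z" unfolding critical_indep_def using Zind dZ D_def by simp
  hence cZI: "card Z \<le> card I" by (rule I_max)
  have IZ: "I \<subseteq> Z" unfolding Z_def by blast
  have fZ: "finite Z" by (rule fin_sub[OF ZV])
  have "card I \<le> card Z" by (rule card_mono[OF fZ IZ])
  hence "card I = card Z" using cZI by simp
  hence "I = Z" by (rule card_subset_eq[OF fZ IZ])
  hence "Z = I" by simp
  hence "S - nbhd V E I \<subseteq> I" unfolding Z_def by blast
  thus ?thesis unfolding X_def by blast
qed

lemma nbhd_I_in: "Y \<subseteq> I \<Longrightarrow> nbhd V E Y \<subseteq> nbhd V E I"
  by (rule nbhd_mono)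

lemma dfcX_le:
  assumes Y: "Y \<subseteq> X"
  shows "dfc X E Y \<le> D"
proof -
  define Ya where "Ya = Y \<inter> I"
  define Yb where "Yb = Y - I"
  have YbN: "Yb \<subseteq> nbhd V E I" using Y unfolding Yb_def X_def by blast
  have NYa: "nbhd V E Ya \<subseteq> nbhd V E I" unfolding Ya_def by (rule nbhd_mono) blast
  have sub: "nbhd V E Ya \<union> nbhd I E Yb \<subseteq> nbhd X E Y"
  proof -
    have "nbhd V E Ya \<subseteq> nbhd X E Y"
      using NYa unfolding nbhd_def X_def Ya_def by blast
    moreover have "nbhd I E Yb \<subseteq> nbhd X E Y"
      unfolding nbhd_def X_def Yb_def by blast
    ultimately show ?thesis by blast
  qed
  have disj: "nbhd V E Ya \<inter> nbhd I E Yb = {}"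
    using NYa I_NI_disj unfolding nbhd_def by blast
  have c1: "card (nbhd V E Ya) + card (nbhd I E Yb) = card (nbhd V E Ya \<union> nbhd I E Yb)"
    using disj fin_nbhd by (simp add: card_Un_disjoint)
  have c2: "card (nbhd V E Ya \<union> nbhd I E Yb) \<le> card (nbhd X E Y)"
    by (rule card_mono[OF fin_nbhd sub])
  have h: "card Yb \<le> card (nbhd I E Yb)" by (rule hall[OF YbN])
  have finY: "finite Y" using Y X_V by (intro fin_sub) (rule subset_trans)
  have cY: "card Y = card Ya + card Yb" unfolding Ya_def Yb_def by (rule card_Int_Diff[OF finY])
  have "dfc V E Ya \<le> D" using dfc_le I_V unfolding Ya_def by blast
  thus ?thesis using c1 c2 h cY unfolding dfc_def by linarith
qed

lemma nbhdX_I: "nbhd X E I = nbhd V E I"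
  unfolding nbhd_def X_def using I_V by blast

lemma dfcX_I: "dfc X E I = D"
  unfolding dfc_def nbhdX_I using dfcI unfolding dfc_def .

lemma I_X: "I \<subseteq> X" unfolding X_def by blast

lemma MaxX: "Max {dfc X E Y | Y. Y \<subseteq> X} = D"
proof (rule Max_eqI)
  have "{dfc X E Y | Y. Y \<subseteq> X} = dfc X E ` Pow X" by auto
  moreover have "finite X" by (rule fin_sub[OF X_V])
  ultimately show "finite {dfc X E Y | Y. Y \<subseteq> X}" by simp
  show "\<And>y. y \<in> {dfc X E Y |Y. Y \<subseteq> X} \<Longrightarrow> y \<le> D" using dfcX_le by blast
  show "D \<in> {dfc X E Y |Y. Y \<subseteq> X}"
    by (rule CollectI, rule exI[of _ I], simp add: dfcX_I I_X)
qed

lemma indX_split: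
  assumes "indep X E S"
  shows "card S = card (S \<inter> I) + card (S - I)"
    and "card (S - I) \<le> card (nbhd I E (S - I))"
    and "card (S \<inter> I) + card (nbhd I E (S - I)) = card ((S \<inter> I) \<union> nbhd I E (S - I))"
    and "(S \<inter> I) \<union> nbhd I E (S - I) \<subseteq> I"
proof -
  have SX: "S \<subseteq> X" and Sind: "\<And>x y. x \<in> S \<Longrightarrow> y \<in> S \<Longrightarrow> \<not> E x y"
    using assms unfolding indep_def by auto
  have finS: "finite S" using SX X_V by (intro fin_sub) (rule subset_trans)
  show "card S = card (S \<inter> I) + card (S - I)" by (rule card_Int_Diff[OF finS])
  show "card (S - I) \<le> card (nbhd I E (S - I))" by (rule hall) (use SX in \<open>auto simp: X_def\<close>)
  have disj: "(S \<inter> I) \<inter> nbhd I E (S - I) = {}" unfolding nbhd_def using Sind by blast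
  show "card (S \<inter> I) + card (nbhd I E (S - I)) = card ((S \<inter> I) \<union> nbhd I E (S - I))"
    using disj finS fin_nbhd by (simp add: card_Un_disjoint)
  show "(S \<inter> I) \<union> nbhd I E (S - I) \<subseteq> I" unfolding nbhd_def by blast
qed

lemma indX_card: "indep X E S \<Longrightarrow> card S \<le> card I"
proof -
  assume a: "indep X E S"
  have "card ((S \<inter> I) \<union> nbhd I E (S - I)) \<le> card I"
    by (rule card_mono[OF finI indX_split(4)[OF a]])
  thus ?thesis using indX_split(1-3)[OF a] by linarith
qed

lemma mciX_I: "max_critical_indep X E I"
  unfolding max_critical_indep_def critical_indep_def
proof (intro conjI allI impI)
  show "indep X E I" unfolding indep_def X_def using I_ind by blast
  show "dfc X E I = Max {dfc X E Y |Y. Y \<subseteq> X}"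
    unfolding MaxX by (rule dfcX_I)
  fix T assume "indep X E T \<and> dfc X E T = Max {dfc X E Y |Y. Y \<subseteq> X}"
  thus "card T \<le> card I" using indX_card by blast
qed

lemma mciX_struct:
  assumes "max_critical_indep X E S"
  shows "card S = card I" and "I - S \<subseteq> nbhd I E (S - I)"
    and "card (nbhd I E (S - I)) = card (S - I)" and "S \<subseteq> X"
    and "\<And>x y. x \<in> S \<Longrightarrow> y \<in> S \<Longrightarrow> \<not> E x y"
proof -
  have ind: "indep X E S" using assms unfolding max_critical_indep_def critical_indep_def by blast
  thus "S \<subseteq> X" "\<And>x y. x \<in> S \<Longrightarrow> y \<in> S \<Longrightarrow> \<not> E x y" unfolding indep_def by auto
  have "critical_indep X E I" using mciX_I unfolding max_critical_indep_def by blast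
  hence "card I \<le> card S" using assms unfolding max_critical_indep_def by blast
  thus cS: "card S = card I" using indX_card[OF ind] by simp
  note sp = indX_split[OF ind]
  have le: "card ((S \<inter> I) \<union> nbhd I E (S - I)) \<le> card I"
    by (rule card_mono[OF finI sp(4)])
  hence eq: "card ((S \<inter> I) \<union> nbhd I E (S - I)) = card I" using sp(1-3) cS by linarith
  hence "(S \<inter> I) \<union> nbhd I E (S - I) = I" using sp(4) finI card_subset_eq by blast
  thus "I - S \<subseteq> nbhd I E (S - I)" by blast
  show "card (nbhd I E (S - I)) = card (S - I)" using sp eq cS by linarith
qed

lemma mciG_mciX:
  assumes S: "max_critical_indep V E S"
  shows "max_critical_indep X E S"
proof -
  have cS: "critical_indep V E S" using S unfolding max_critical_indep_def by blast
  have SX: "S \<subseteq> X" by (rule crit_sub_X[OF cS])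
  have Sind: "\<And>x y. x \<in> S \<Longrightarrow> y \<in> S \<Longrightarrow> \<not> E x y" and dS: "dfc V E S = D"
    using cS unfolding critical_indep_def indep_def D_def by auto
  have indX: "indep X E S" unfolding indep_def using SX Sind by blast
  have "nbhd X E S \<subseteq> nbhd V E S" unfolding nbhd_def using X_V by blast
  hence "card (nbhd X E S) \<le> card (nbhd V E S)" by (rule card_mono[OF fin_nbhd])
  hence "dfc X E S \<ge> D" using dS unfolding dfc_def by linarith
  hence dXS: "dfc X E S = D" using dfcX_le[OF SX] by simp
  have "critical_indep V E I" using mI unfolding max_critical_indep_def by blast
  hence "card I \<le> card S" using S unfolding max_critical_indep_def by blast
  moreover have "card S \<le> card I" using I_max[OF cS] .
  ultimately have "card S = card I" by simp
  hence cc: "\<And>T. critical_indep X E T \<Longrightarrow> card T \<le> card S"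
    unfolding critical_indep_def using indX_card by simp
  have "critical_indep X E S" unfolding critical_indep_def MaxX using indX dXS by simp
  thus ?thesis unfolding max_critical_indep_def using cc by blast
qed


definition "tight A \<longleftrightarrow> A \<subseteq> nbhd V E I \<and> card (nbhd I E A) = card A"

lemma tight_Un:
  assumes "tight A1" "tight A2"
  shows "tight (A1 \<union> A2)"
proof -
  have s1: "A1 \<subseteq> nbhd V E I" and s2: "A2 \<subseteq> nbhd V E I"
    and e1: "card (nbhd I E A1) = card A1" and e2: "card (nbhd I E A2) = card A2"
    using assms unfolding tight_def by auto
  have f1: "finite A1" by (rule finite_subset[OF s1 fin_nbhd])
  have f2: "finite A2" by (rule finite_subset[OF s2 fin_nbhd])
  have a: "card A1 + card A2 = card (A1 \<union> A2) + card (A1 \<inter> A2)" by (rule card_Un_Int[OF f1 f2])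
  have b: "card (nbhd I E A1) + card (nbhd I E A2) = card (nbhd I E A1 \<union> nbhd I E A2) + card (nbhd I E A1 \<inter> nbhd I E A2)"
    by (rule card_Un_Int[OF fin_nbhd fin_nbhd])
  have n1: "nbhd I E (A1 \<union> A2) = nbhd I E A1 \<union> nbhd I E A2" by (rule nbhd_Un)
  have n2: "nbhd I E (A1 \<inter> A2) \<subseteq> nbhd I E A1 \<inter> nbhd I E A2" unfolding nbhd_def by blast
  have c: "card (nbhd I E (A1 \<inter> A2)) \<le> card (nbhd I E A1 \<inter> nbhd I E A2)"
    by (rule card_mono[OF _ n2]) (simp add: fin_nbhd)
  have su: "A1 \<union> A2 \<subseteq> nbhd V E I" using s1 s2 by blast
  have si: "A1 \<inter> A2 \<subseteq> nbhd V E I" using s1 by blast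
  have h1: "card (A1 \<union> A2) \<le> card (nbhd I E (A1 \<union> A2))" by (rule hall[OF su])
  have h2: "card (A1 \<inter> A2) \<le> card (nbhd I E (A1 \<inter> A2))" by (rule hall[OF si])
  have n1': "card (nbhd I E (A1 \<union> A2)) = card (nbhd I E A1 \<union> nbhd I E A2)" using n1 by simp
  have "card (nbhd I E (A1 \<union> A2)) = card (A1 \<union> A2)" using a b c h1 h2 n1' e1 e2 by linarith
  thus ?thesis unfolding tight_def using su by blast
qed

lemma main:
  "card (nucleus V E) + card (diadem V E) \<le> card (nucleus X E) + card (diadem X E)"
proof -
  define FG where "FG = {S. max_critical_indep V E S}"
  define FH where "FH = {S. max_critical_indep X E S}"
  have IFG: "I \<in> FG" unfolding FG_def using mI by simp
  have IFH: "I \<in> FH" unfolding FH_def using mciX_I by simp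
  have FGH: "FG \<subseteq> FH" unfolding FG_def FH_def using mciG_mciX by blast
  have nucG: "nucleus V E = \<Inter> FG" unfolding nucleus_def FG_def[symmetric] using IFG by auto
  have nucH: "nucleus X E = \<Inter> FH" unfolding nucleus_def FH_def[symmetric] using IFH by auto
  have diaG: "diadem V E = \<Union> FG" unfolding diadem_def FG_def ..
  have diaH: "diadem X E = \<Union> FH" unfolding diadem_def FH_def ..
  have FHX: "\<And>S. S \<in> FH \<Longrightarrow> S \<subseteq> X" unfolding FH_def using mciX_struct(4) by blast
  have dHX: "\<Union> FH \<subseteq> X" using FHX by blast
  have finX: "finite X" by (rule fin_sub[OF X_V])
  have fin_dH: "finite (\<Union> FH)" by (rule finite_subset[OF dHX finX])
  have GH: "\<Union> FG \<subseteq> \<Union> FH" using FGH by blast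
  have fin_dG: "finite (\<Union> FG)" by (rule finite_subset[OF GH fin_dH])
  have nHG: "\<Inter> FH \<subseteq> \<Inter> FG" using FGH by blast
  have nGI: "\<Inter> FG \<subseteq> I" using IFG by blast
  have fin_nG: "finite (\<Inter> FG)" by (rule finite_subset[OF nGI finI])
  define W where "W = \<Inter> FG - \<Inter> FH"
  define B where "B = \<Union> FH - I"
  have BN: "B \<subseteq> nbhd V E I" unfolding B_def using dHX unfolding X_def by blast
  have finB: "finite B" by (rule finite_subset[OF BN fin_nbhd])
  define TT where "TT = {A. A \<subseteq> B \<and> tight A}"
  have finTT: "finite TT" unfolding TT_def using finB by simp
  have eTT: "{} \<in> TT" unfolding TT_def tight_def nbhd_def by simp
  define m where "m = Max (card ` TT)"
  have "m \<in> card ` TT" unfolding m_def using finTT eTT by (intro Max_in) auto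
  then obtain T where T: "T \<in> TT" "card T = m" by blast
  have Tmax: "card A \<le> card T" if A: "A \<in> TT" for A
  proof -
    have "card A \<in> card ` TT" using A by blast
    hence "card A \<le> Max (card ` TT)" using finTT by (intro Max_ge) auto
    thus ?thesis using T(2) unfolding m_def by simp
  qed
  have TB: "T \<subseteq> B" and Tt: "tight T" using T(1) unfolding TT_def by auto
  have finT: "finite T" by (rule finite_subset[OF TB finB])
  have TN: "T \<subseteq> nbhd V E I" using TB BN by blast
  have Tc: "card (nbhd I E T) = card T" using Tt unfolding tight_def by blast
  have SbT: "S - I \<subseteq> T" if S: "S \<in> FH" for S
  proof -
    have mS: "max_critical_indep X E S" using S unfolding FH_def by simp
    have SB: "S - I \<subseteq> B" unfolding B_def using S by blast
    have "tight (S - I)" unfolding tight_def using mciX_struct(3)[OF mS] SB BN by blast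
    hence tU: "tight (T \<union> (S - I))" by (rule tight_Un[OF Tt])
    have "T \<union> (S - I) \<in> TT" unfolding TT_def using tU TB SB by blast
    hence le: "card (T \<union> (S - I)) \<le> card T" by (rule Tmax)
    have fU: "finite (T \<union> (S - I))" using finT finite_subset[OF SB finB] by simp
    have "card T \<le> card (T \<union> (S - I))" by (rule card_mono[OF fU]) blast
    hence "card T = card (T \<union> (S - I))" using le by simp
    moreover have sub: "T \<subseteq> T \<union> (S - I)" by blast
    ultimately have "T = T \<union> (S - I)" using card_subset_eq[OF fU sub] by simp
    thus ?thesis by blast
  qed
  have WN: "W \<subseteq> nbhd I E T"
  proof
    fix w assume w: "w \<in> W"
    hence wI: "w \<in> I" unfolding W_def using nGI by blast
    from w obtain S where S: "S \<in> FH" "w \<notin> S" unfolding W_def by blast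
    have mS: "max_critical_indep X E S" using S unfolding FH_def by simp
    have "w \<in> nbhd I E (S - I)" using mciX_struct(2)[OF mS] wI S(2) by blast
    moreover have "nbhd I E (S - I) \<subseteq> nbhd I E T" by (rule nbhd_mono[OF SbT[OF S(1)]])
    ultimately show "w \<in> nbhd I E T" by blast
  qed
  define A where "A = T - nbhd V E W"
  have AN: "A \<subseteq> nbhd V E I" unfolding A_def using TN by blast
  have hA: "card A \<le> card (nbhd I E A)" by (rule hall[OF AN])
  have NA: "nbhd I E A \<subseteq> nbhd I E T - W"
  proof
    fix v assume v: "v \<in> nbhd I E A"
    then obtain a where a: "a \<in> A" "E v a" "v \<in> I" unfolding nbhd_def by blast
    have "v \<notin> W"
    proof
      assume "v \<in> W"
      hence "a \<in> nbhd V E W" using symE[OF a(2)] EV[OF a(2)] unfolding nbhd_def by blast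
      thus False using a(1) unfolding A_def by blast
    qed
    moreover have "v \<in> nbhd I E T" using a unfolding A_def nbhd_def by blast
    ultimately show "v \<in> nbhd I E T - W" by blast
  qed
  have finW: "finite W" unfolding W_def using fin_nG by simp
  have c1: "card (nbhd I E A) \<le> card (nbhd I E T - W)"
    by (rule card_mono[OF _ NA]) (simp add: fin_nbhd)
  have c2: "card (nbhd I E T - W) = card (nbhd I E T) - card W"
    by (rule card_Diff_subset[OF finW WN])
  have c2': "card W \<le> card (nbhd I E T)" by (rule card_mono[OF fin_nbhd WN])
  have c3: "card T = card (T \<inter> nbhd V E W) + card A" unfolding A_def by (rule card_Int_Diff[OF finT])
  have cW: "card W \<le> card (T \<inter> nbhd V E W)" using hA c1 c2 c2' c3 Tc by linarith
  have TNd: "T \<inter> nbhd V E W \<subseteq> \<Union> FH - \<Union> FG"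
  proof
    fix t assume t: "t \<in> T \<inter> nbhd V E W"
    have "t \<in> \<Union> FH" using t TB unfolding B_def by blast
    moreover have "t \<notin> \<Union> FG"
    proof
      assume "t \<in> \<Union> FG"
      then obtain S where S: "S \<in> FG" "t \<in> S" by blast
      obtain w where w: "w \<in> W" "E t w" using t unfolding nbhd_def by blast
      have "w \<in> S" using w(1) S(1) unfolding W_def by blast
      moreover have "indep V E S" using S(1) unfolding FG_def max_critical_indep_def critical_indep_def by blast
      ultimately show False using S(2) w(2) unfolding indep_def by blast
    qed
    ultimately show "t \<in> \<Union> FH - \<Union> FG" by blast
  qed
  have disj: "\<Union> FG \<inter> (T \<inter> nbhd V E W) = {}" using TNd by blast
  have "card (\<Union> FG) + card (T \<inter> nbhd V E W) = card (\<Union> FG \<union> (T \<inter> nbhd V E W))"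
    using fin_dG finT disj by (simp add: card_Un_disjoint)
  also have "\<dots> \<le> card (\<Union> FH)" by (rule card_mono[OF fin_dH]) (use GH TNd in blast)
  finally have dd: "card (\<Union> FG) + card (T \<inter> nbhd V E W) \<le> card (\<Union> FH)" .
  have nn: "card (\<Inter> FG) = card (\<Inter> FH) + card W" unfolding W_def
    using nHG fin_nG by (metis card_Diff_subset card_mono add.commute le_add_diff_inverse finite_subset)
  show ?thesis unfolding nucG nucH diaG diaH using dd nn cW by linarith
qed

end

theorem lemma2p4:
  fixes V :: "'a set" and E :: "'a \<Rightarrow> 'a \<Rightarrow> bool" and I :: "'a set"
  assumes "simple_graph V E"
    and "max_critical_indep V E I"
  shows "card (nucleus V E) + card (diadem V E)
         \<le> card (nucleus (I \<union> nbhd V E I) E) + card (diadem (I \<union> nbhd V E I) E)"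
proof -
  interpret mci V E I using assms by unfold_locales
  show ?thesis using main unfolding X_def .
qed

end
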